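(* For every $n\ge 0$, $\tilde h_n(q)=\bar c_{n+1}(q)$, where $\tilde h_n(q)=q^{n(n-1)/2}h_n(q^{-1})$ and $\bar c_n(q)$ are the Han–Zeng $q$-normalized median Genocchi numbers.
   Context: Han–Zeng polynomials: define $C_1(x,q)=1$ and for $n\ge2$ $$C_n(x,q)=(1+qx)\,\frac{(1+qx)\,C_{n-1}(1+qx,q)-x\,C_{n-1}(x,q)}{1+qx-x},$$ and set $\bar c_n(q)=C_n(1,q)/(1+q)^{n-1}$ for $n\ge1$ (these are polynomials in $q$). Gaussian binomial coefficients: $\binom{m}{k}_q=\frac{[m]_q!}{[k]_q![m-k]_q!}$, $[m]_q!=\prod_{i=1}^m\frac{1-q^i}{1-q}$, zero unless $0\le k\le m$. Let $W$ be $\mathbb C^n$ with basis $w_1,\dots,w_n$, $pr_k:W\to W$ the projection killing the $w_k$-coordinate. The degenerate flag variety $\mathrm{Fl}^a_n$ consists of tuples $(V_1,\dots,V_{n-1})$ of subspaces with $\dim V_k=k$ and $pr_{k+1}V_k\subset V_{k+1}$ ($k=1,\dots,n-2$); it has a decomposition into complex affine cells and $h_n(q)$ denotes its Poincaré polynomial with $q=t^2$ (degree $n(n-1)/2$, $h_0=h_1=1$). It is known that $h_n(q)=\sum_{f_1,\dots,f_{n-1}\ge 0} q^{\sum_{k=1}^{n-1}(k-f_k)(1-f_k+f_{k+1})}\prod_{k=1}^{n-1}\binom{1+f_{k-1}}{f_k}_{q}\binom{1+f_{k+1}}{f_k}_{q}$ with $f_0=f_n=0$. *)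

theory Defs
  imports "HOL-Computational_Algebra.Polynomial"
begin

text \<open>Han-Zeng polynomials C_n(x,q), as polynomials in x whose coefficients are
  integer polynomials in q (outer variable x, inner variable q).
  The division in the recursion is exact division of polynomials.\<close>

fun HZ_C :: "nat \<Rightarrow> int poly poly" where
  "HZ_C 0 = 1"
| "HZ_C (Suc 0) = 1"
| "HZ_C (Suc (Suc m)) =
     (let X = [:0, 1:] :: int poly poly;
          Q = [:[:0, 1:]:] :: int poly poly;
          Y = 1 + Q * X
      in Y * ((Y * pcompose (HZ_C (Suc m)) Y - X * HZ_C (Suc m)) div (Y - X)))"

definition HZ_cbar :: "nat \<Rightarrow> int poly" where
  "HZ_cbar n = poly (HZ_C n) 1 div [:1, 1:] ^ (n - 1)"

definition qint :: "nat \<Rightarrow> int poly" where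
  "qint i = (\<Sum>j<i. monom 1 j)"

definition qfact :: "nat \<Rightarrow> int poly" where
  "qfact m = (\<Prod>i=1..m. qint i)"

definition qbinom :: "nat \<Rightarrow> nat \<Rightarrow> int poly" where
  "qbinom m k = (if k \<le> m then qfact m div (qfact k * qfact (m - k)) else 0)"

text \<open>Summation data for h_n: f_1,...,f_{n-1} encoded as f :: nat => nat with
  f k = 0 outside {1..n-1} (so f_0 = f_n = 0).\<close>
definition hz_binprod :: "nat \<Rightarrow> (nat \<Rightarrow> nat) \<Rightarrow> int poly" where
  "hz_binprod n f = (\<Prod>k=1..n-1. qbinom (1 + f (k - 1)) (f k) * qbinom (1 + f (k + 1)) (f k))"

definition hz_exp :: "nat \<Rightarrow> (nat \<Rightarrow> nat) \<Rightarrow> int" where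
  "hz_exp n f = (\<Sum>k=1..n-1. (int k - int (f k)) * (1 - int (f k) + int (f (k + 1))))"

text \<open>Index set: all admissible f whose summand is nonzero (the sum in the paper
  runs over all f_1,...,f_{n-1} >= 0; terms with a vanishing product contribute 0).\<close>
definition hz_index :: "nat \<Rightarrow> (nat \<Rightarrow> nat) set" where
  "hz_index n = {f. (\<forall>k. k \<notin> {1..n-1} \<longrightarrow> f k = 0) \<and> hz_binprod n f \<noteq> 0}"

text \<open>Poincare polynomial h_n of the degenerate flag variety, via the known formula,
  evaluated at a nonzero real q.\<close>
definition h_poincare :: "nat \<Rightarrow> real \<Rightarrow> real" where
  "h_poincare n q = (\<Sum>f\<in>hz_index n. q powi hz_exp n f * poly (map_poly of_int (hz_binprod n f)) q)"

definition h_tilde :: "nat \<Rightarrow> real \<Rightarrow> real" where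
  "h_tilde n q = q ^ (n * (n - 1) div 2) * h_poincare n (inverse q)"

end

theory Submission
  imports Defs
begin


definition XX :: "int poly poly" where "XX = [:0, 1:]"
definition QQ :: "int poly poly" where "QQ = [:[:0, 1:]:]"
definition YY :: "int poly poly" where "YY = 1 + QQ * XX"

lemma HZ_C_step: "HZ_C (Suc (Suc m)) = YY * ((YY * pcompose (HZ_C (Suc m)) YY - XX * HZ_C (Suc m)) div (YY - XX))"
  by (simp add: XX_def QQ_def YY_def Let_def)

lemma pCons_XX: "pCons c P = [:c:] + XX * P"
  by (simp add: XX_def)

lemma XX_comp [simp]: "pcompose XX p = p"
  by (simp add: XX_def pcompose_pCons)

lemma dvd_N: "(YY - XX) dvd (YY * pcompose P YY - XX * P)"
proof (induction P)
  case 0 then show ?case by simp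
next
  case (pCons c P)
  then obtain k where k: "YY * pcompose P YY - XX * P = (YY - XX) * k" by blast
  have eq: "pCons c P = [:c:] + XX * P" by (simp add: XX_def)
  have "YY * pcompose ([:c:] + XX * P) YY - XX * ([:c:] + XX * P)
      = (YY - XX) * [:c:] + YY * (YY * pcompose P YY - XX * P) + (YY - XX) * XX * P"
    by (simp add: pcompose_add pcompose_mult algebra_simps smult_diff_right)
  also have "\<dots> = (YY - XX) * ([:c:] + YY * k + XX * P)" unfolding k by (simp add: algebra_simps)
  finally have "(YY - XX) dvd (YY * pcompose ([:c:] + XX * P) YY - XX * ([:c:] + XX * P))"
    by (rule dvdI)
  then show ?case by (simp only: eq[symmetric])
qed

lemma YY_XX_nz: "YY - XX \<noteq> 0"
proof
  assume "YY - XX = 0"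
  then have "poly (YY - XX) 0 = 0" by simp
  then show False by (simp add: YY_def XX_def QQ_def)
qed

lemma qint_0 [simp]: "qint 0 = 0" by (simp add: qint_def)
lemma qint_Suc: "qint (Suc j) = 1 + [:0,1:] * qint j"
  unfolding qint_def sum.lessThan_Suc_shift by (simp add: monom_Suc sum_distrib_left monom_0)
lemma qint_Suc': "qint (Suc j) = qint j + [:0,1:] ^ j"
  unfolding qint_def by (simp add: monom_altdef)
lemma qint_1 [simp]: "qint 1 = 1" by (simp add: qint_def)
lemma qint_Suc0 [simp]: "qint (Suc 0) = 1" by (simp add: qint_def)

definition psi :: "nat \<Rightarrow> int poly poly" where
  "psi a = (\<Prod>j=1..a. XX - [:qint j:])"

lemma psi_0 [simp]: "psi 0 = 1" by (simp add: psi_def)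
lemma psi_Suc: "psi (Suc a) = (XX - [:qint (Suc a):]) * psi a"
  by (simp add: psi_def prod.nat_ivl_Suc')

lemma const_add: "[:a + b:] = [:a:] + [:b:]" by simp

lemma const_QQ: "[:1 + [:0,1:] * c:] = 1 + QQ * [:c:]"
  by (simp add: QQ_def one_pCons)
lemma YY_minus: "YY - [:qint (Suc j):] = QQ * (XX - [:qint j:])"
  unfolding qint_Suc const_QQ YY_def by (simp add: algebra_simps)


lemma psi_comp: "pcompose (psi (Suc a)) YY = QQ ^ Suc a * XX * psi a"
proof (induction a)
  case 0 then show ?case
    using YY_minus[of 0] by (simp add: psi_Suc pcompose_mult pcompose_diff)
next
  case (Suc a)
  show ?case
  proof -
    have "pcompose (psi (Suc (Suc a))) YY = (YY - [:qint (Suc (Suc a)):]) * pcompose (psi (Suc a)) YY"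
      by (simp add: psi_Suc[of "Suc a"] pcompose_mult pcompose_diff)
    also have "\<dots> = QQ * (XX - [:qint (Suc a):]) * (QQ ^ Suc a * XX * psi a)"
      by (simp add: Suc YY_minus)
    also have "\<dots> = QQ ^ Suc (Suc a) * XX * psi (Suc a)"
      by (simp only: psi_Suc[of a] power_Suc mult_ac)
    finally show ?thesis .
  qed
qed

lemma ring_id:
  fixes Q X Y s t p :: "'a::comm_ring_1"
  assumes "t = 1 + Q*s" "Y = 1 + Q*X"
  shows "Y*(Y*((t-s)*X*p) - X*((X-s)*p)) = (Y-X)*(Q*t*((X-t)*((X-s)*p)) + (1+Q)*t^2*((X-s)*p) + s*t^2*p)"
  unfolding assms by (simp add: algebra_simps power2_eq_square)

definition cup :: "nat \<Rightarrow> int poly" where "cup a = [:0,1:] * qint (Suc a)"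
definition clev :: "nat \<Rightarrow> int poly" where "clev a = [:1,1:] * qint (Suc a) ^ 2"
definition cdn :: "nat \<Rightarrow> int poly" where "cdn a = qint a * qint (Suc a) ^ 2"

definition MM :: "nat \<Rightarrow> int poly poly" where
  "MM a = smult (cup a) (psi (Suc a)) + smult (clev a) (psi a) + smult (cdn a) (psi (a - 1))"

lemma cdn_0 [simp]: "cdn 0 = 0" by (simp add: cdn_def)

lemma key: "YY * (YY * pcompose (psi a) YY - XX * psi a) = (YY - XX) * MM a"
proof (cases a)
  case 0
  have m: "MM 0 = QQ * (XX - 1) + (1 + QQ)"
    by (simp add: MM_def psi_Suc cup_def clev_def QQ_def one_pCons power2_eq_square)
  have "MM 0 = YY" unfolding m YY_def by (simp add: algebra_simps)
  then show ?thesis using 0 by (simp add: pcompose_1 algebra_simps)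
next
  case (Suc b)
  define s where "s = [:qint (Suc b):]"
  define t where "t = [:qint (Suc (Suc b)):]"
  have t: "t = 1 + QQ * s" unfolding t_def s_def qint_Suc[of "Suc b"] const_QQ ..
  have qp: "QQ ^ Suc b = t - s"
    unfolding t_def s_def qint_Suc'[of "Suc b"] QQ_def poly_const_pow by simp
  have P1: "pcompose (psi a) YY = (t - s) * XX * psi b"
    using psi_comp[of b] qp Suc by simp
  have M: "MM a = QQ*t*((XX - t)*((XX - s)*psi b)) + (1+QQ)*t^2*((XX-s)*psi b) + s*t^2*psi b"
  proof -
    have sm: "smult c p = [:c:] * p" for c :: "int poly" and p :: "int poly poly" by simp
    have cm: "[:x*y:] = [:x:]*[:y:]" for x y :: "int poly" by (simp add: mult.commute)
    have e1: "[:cup a:] = QQ*t" by (simp add: cup_def cm Suc t_def QQ_def)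
    have e2: "[:clev a:] = (1+QQ)*t^2"
      by (simp only: clev_def cm Suc t_def QQ_def poly_const_pow) (simp add: one_pCons)
    have e3: "[:cdn a:] = s*t^2" by (simp only: cdn_def cm Suc t_def s_def poly_const_pow)
    have "MM a = [:cup a:]*psi (Suc a) + [:clev a:]*psi a + [:cdn a:]*psi b"
      by (simp only: MM_def sm Suc diff_Suc_1)
    also have "\<dots> = QQ*t*((XX - t)*((XX - s)*psi b)) + (1+QQ)*t^2*((XX-s)*psi b) + s*t^2*psi b"
      unfolding e1 e2 e3 by (simp add: Suc psi_Suc s_def t_def)
    finally show ?thesis .
  qed
  have Y: "YY = 1 + QQ * XX" by (simp add: YY_def)
  have pa: "psi a = (XX - s) * psi b" by (simp add: Suc psi_Suc s_def)
  show ?thesis unfolding P1 M unfolding pa by (rule ring_id[OF t Y])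
qed

fun hv :: "nat \<Rightarrow> nat \<Rightarrow> int poly" where
  "hv 0 a = (if a = 0 then 1 else 0)"
| "hv (Suc n) a = clev a * hv n a + (if a = 0 then 0 else cup (a - 1) * hv n (a - 1))
      + cdn (Suc a) * hv n (Suc a)"

lemma hv_zero: "n < a \<Longrightarrow> hv n a = 0"
  by (induction n arbitrary: a) auto

definition NN :: "int poly poly \<Rightarrow> int poly poly" where
  "NN P = YY * pcompose P YY - XX * P"

lemma NN_sum: "NN (\<Sum>a\<in>A. smult (c a) (psi a)) = (\<Sum>a\<in>A. smult (c a) (NN (psi a)))"
  by (simp only: NN_def pcompose_sum pcompose_smult sum_distrib_left mult_smult_right
     smult_diff_right sum_subtractf)

lemma regroup:
  assumes "\<And>a. K \<le> a \<Longrightarrow> g a = 0"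
  shows "(\<Sum>a<K. smult (g a) (MM a)) =
    (\<Sum>a<Suc K. smult (clev a * g a + (if a = 0 then 0 else cup (a - 1) * g (a - 1))
      + cdn (Suc a) * g (Suc a)) (psi a))"
proof -
  have L: "(\<Sum>a<K. smult (g a) (MM a)) = (\<Sum>a<K. smult (g a * cup a) (psi (Suc a)))
     + (\<Sum>a<K. smult (g a * clev a) (psi a)) + (\<Sum>a<K. smult (g a * cdn a) (psi (a - 1)))"
    by (simp add: MM_def smult_add_right sum.distrib)
  have L3: "(\<Sum>a<K. smult (g a * cdn a) (psi (a - 1))) = (\<Sum>a<K. smult (g (Suc a) * cdn (Suc a)) (psi a))"
  proof -
    have "(\<Sum>a<K. smult (g a * cdn a) (psi (a - 1))) = (\<Sum>a<Suc K. smult (g a * cdn a) (psi (a - 1)))"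
      by (simp add: assms)
    also have "\<dots> = (\<Sum>a<K. smult (g (Suc a) * cdn (Suc a)) (psi a))"
      by (subst sum.lessThan_Suc_shift) simp
    finally show ?thesis .
  qed
  have R: "(\<Sum>a<Suc K. smult (clev a * g a + (if a = 0 then 0 else cup (a - 1) * g (a - 1))
      + cdn (Suc a) * g (Suc a)) (psi a)) =
     (\<Sum>a<Suc K. smult (clev a * g a) (psi a)) + (\<Sum>a<Suc K. smult (if a = 0 then 0 else cup (a - 1) * g (a - 1)) (psi a))
     + (\<Sum>a<Suc K. smult (cdn (Suc a) * g (Suc a)) (psi a))"
    by (simp add: smult_add_left sum.distrib)
  have R1: "(\<Sum>a<Suc K. smult (clev a * g a) (psi a)) = (\<Sum>a<K. smult (g a * clev a) (psi a))"
    by (simp add: assms mult.commute)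
  have R2: "(\<Sum>a<Suc K. smult (if a = 0 then 0 else cup (a - 1) * g (a - 1)) (psi a)) =
      (\<Sum>a<K. smult (g a * cup a) (psi (Suc a)))"
    by (subst sum.lessThan_Suc_shift) (simp add: mult.commute)
  have R3: "(\<Sum>a<Suc K. smult (cdn (Suc a) * g (Suc a)) (psi a)) = (\<Sum>a<K. smult (g (Suc a) * cdn (Suc a)) (psi a))"
    by (simp add: assms mult.commute)
  show ?thesis unfolding L L3 R R1 R2 R3 by (simp add: algebra_simps)
qed

lemma decomp: "HZ_C (Suc n) = (\<Sum>a<Suc n. smult (hv n a) (psi a))"
proof (induction n)
  case 0 then show ?case by simp
next
  case (Suc n)
  define C where "C = HZ_C (Suc n)"
  define D where "D = NN C div (YY - XX)"
  have ND: "NN C = (YY - XX) * D"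
    unfolding D_def NN_def using dvd_N by (simp add: dvd_mult_div_cancel)
  have "(YY - XX) * (YY * D) = YY * NN C" by (simp add: ND algebra_simps)
  also have "\<dots> = (\<Sum>a<Suc n. smult (hv n a) (YY * NN (psi a)))"
    unfolding C_def Suc NN_sum by (simp only: sum_distrib_left mult_smult_right)
  also have "\<dots> = (YY - XX) * (\<Sum>a<Suc n. smult (hv n a) (MM a))"
    unfolding NN_def key by (simp only: sum_distrib_left mult_smult_right)
  finally have "YY * D = (\<Sum>a<Suc n. smult (hv n a) (MM a))"
    using YY_XX_nz by simp
  also have "\<dots> = (\<Sum>a<Suc (Suc n). smult (hv (Suc n) a) (psi a))"
    by (subst regroup) (auto simp: hv_zero)
  finally show ?case
    unfolding HZ_C_step D_def NN_def C_def .
qed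

lemma psi_at_1: "poly (psi (Suc b)) 1 = 0"
  by (induction b) (simp_all add: psi_Suc XX_def)

lemma HZ_at_1: "poly (HZ_C (Suc n)) 1 = hv n 0"
  unfolding decomp poly_sum by (subst sum.lessThan_Suc_shift) (simp add: psi_at_1)

definition TT :: "nat \<Rightarrow> int poly" where "TT k = qint k * qint (Suc k) div [:1,1:]"

lemma TT_dvd: "[:1,1:] dvd qint k * qint (Suc k)"
proof (induction k)
  case 0 then show ?case by simp
next
  case (Suc k)
  define P :: "int poly" where "P = [:1,1:]"
  define X :: "int poly" where "X = [:0,1:]"
  from Suc obtain p where p: "qint k * qint (Suc k) = P * p" unfolding P_def by blast
  have e: "qint (Suc (Suc k)) = qint k + X ^ k * P"
    by (simp add: qint_Suc' algebra_simps P_def X_def)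
  have "qint (Suc k) * qint (Suc (Suc k)) = qint k * qint (Suc k) + P * (qint (Suc k) * X ^ k)"
    unfolding e by (simp add: algebra_simps)
  also have "\<dots> = P * (p + qint (Suc k) * X ^ k)" unfolding p by (simp add: algebra_simps)
  finally show ?case unfolding P_def by (rule dvdI)
qed

lemma TT: "[:1,1:] * TT k = qint k * qint (Suc k)"
  unfolding TT_def using TT_dvd by (rule dvd_mult_div_cancel)

fun hu :: "nat \<Rightarrow> nat \<Rightarrow> int poly" where
  "hu 0 a = (if a = 0 then 1 else 0)"
| "hu (Suc n) a = qint (Suc a) ^ 2 * hu n a + (if a = 0 then 0 else TT a * hu n (a - 1))
      + [:0,1:] * TT (Suc a) * hu n (Suc a)"

lemma qfact_0 [simp]: "qfact 0 = 1" by (simp add: qfact_def)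
lemma qfact_Suc: "qfact (Suc a) = qfact a * qint (Suc a)"
  by (simp add: qfact_def prod.nat_ivl_Suc' mult.commute)

lemma gauge: "qfact (Suc a) * hv n a = [:1,1:] ^ n * [:0,1:] ^ a * hu n a"
proof (induction n arbitrary: a)
  case 0 then show ?case by (simp add: qfact_Suc)
next
  case (Suc n)
  define P :: "int poly" where "P = [:1,1:]"
  define X :: "int poly" where "X = [:0,1:]"
  note IH = Suc[folded P_def X_def]
  have E1: "qfact (Suc a) * (clev a * hv n a) = P ^ Suc n * X ^ a * (qint (Suc a) ^ 2 * hu n a)"
  proof -
    have "qfact (Suc a) * (clev a * hv n a) = P * qint (Suc a) ^ 2 * (qfact (Suc a) * hv n a)"
      by (simp add: clev_def P_def algebra_simps)
    also have "\<dots> = P ^ Suc n * X ^ a * (qint (Suc a) ^ 2 * hu n a)"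
      by (simp only: IH) (simp add: algebra_simps)
    finally show ?thesis .
  qed
  have E2: "qfact (Suc a) * (if a = 0 then 0 else cup (a - 1) * hv n (a - 1)) =
       P ^ Suc n * X ^ a * (if a = 0 then 0 else TT a * hu n (a - 1))"
  proof (cases a)
    case 0 then show ?thesis by simp
  next
    case (Suc b)
    have "qfact (Suc a) * (cup b * hv n b) = qint (Suc (Suc b)) * X * qint (Suc b) * (qfact (Suc b) * hv n b)"
      by (simp add: Suc qfact_Suc[of "Suc b"] cup_def X_def algebra_simps)
    also have "\<dots> = P ^ n * (qint (Suc b) * qint (Suc (Suc b))) * X ^ Suc b * hu n b"
      by (simp only: IH) (simp add: algebra_simps)
    also have "\<dots> = P ^ Suc n * X ^ a * (TT a * hu n b)"
      unfolding TT[folded P_def, symmetric] by (simp add: Suc algebra_simps)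
    finally show ?thesis using Suc by simp
  qed
  have E3: "qfact (Suc a) * (cdn (Suc a) * hv n (Suc a)) = P ^ Suc n * X ^ a * (X * TT (Suc a) * hu n (Suc a))"
  proof -
    have "qfact (Suc a) * (cdn (Suc a) * hv n (Suc a)) = qint (Suc a) * qint (Suc (Suc a)) * (qfact (Suc (Suc a)) * hv n (Suc a))"
      by (simp add: qfact_Suc[of "Suc a"] cdn_def algebra_simps power2_eq_square)
    also have "\<dots> = P ^ n * (qint (Suc a) * qint (Suc (Suc a))) * X ^ Suc a * hu n (Suc a)"
      by (simp only: IH) (simp add: algebra_simps)
    also have "\<dots> = P ^ Suc n * X ^ a * (X * TT (Suc a) * hu n (Suc a))"
      unfolding TT[folded P_def, symmetric] by (simp add: algebra_simps)
    finally show ?thesis .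
  qed
  show ?case
    unfolding hv.simps hu.simps P_def[symmetric] X_def[symmetric] distrib_left E1 E2 E3 by simp
qed

lemma cbar_hu: "HZ_cbar (Suc n) = hu n 0"
proof -
  have "hv n 0 = [:1,1:] ^ n * hu n 0" using gauge[of 0 n] by (simp add: qfact_Suc)
  then show ?thesis by (simp add: HZ_cbar_def HZ_at_1)
qed




definition ev :: "int poly \<Rightarrow> real \<Rightarrow> real" where
  "ev p x = poly (map_poly of_int p) x"

lemma map_of_int_add: "map_poly (of_int :: int \<Rightarrow> real) (p + r) = map_poly of_int p + map_poly of_int r"
  by (rule poly_eqI) (simp add: coeff_map_poly)
lemma map_of_int_mult: "map_poly (of_int :: int \<Rightarrow> real) (p * r) = map_poly of_int p * map_poly of_int r"
  by (rule poly_eqI) (simp add: coeff_map_poly coeff_mult)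
lemma map_of_int_minus: "map_poly (of_int :: int \<Rightarrow> real) (- p) = - map_poly of_int p"
  by (rule poly_eqI) (simp add: coeff_map_poly)

lemma ev_add [simp]: "ev (p + r) x = ev p x + ev r x"
  by (simp add: ev_def map_of_int_add)
lemma ev_mult [simp]: "ev (p * r) x = ev p x * ev r x"
  by (simp add: ev_def map_of_int_mult)
lemma ev_minus [simp]: "ev (- p) x = - ev p x"
  by (simp add: ev_def map_of_int_minus)
lemma ev_diff [simp]: "ev (p - r) x = ev p x - ev r x"
  using ev_add[of p "-r" x] by simp
lemma ev_1 [simp]: "ev 1 x = 1" by (simp add: ev_def)
lemma ev_0 [simp]: "ev 0 x = 0" by (simp add: ev_def)
lemma ev_power [simp]: "ev (p ^ k) x = ev p x ^ k"
  by (induction k) simp_all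
lemma ev_prod: "finite A \<Longrightarrow> ev (\<Prod>i\<in>A. f i) x = (\<Prod>i\<in>A. ev (f i) x)"
  by (induction A rule: finite_induct) simp_all
lemma ev_sum: "finite A \<Longrightarrow> ev (\<Sum>i\<in>A. f i) x = (\<Sum>i\<in>A. ev (f i) x)"
  by (induction A rule: finite_induct) simp_all
lemma ev_X [simp]: "ev [:0,1:] x = x" by (simp add: ev_def map_poly_pCons)
lemma ev_11 [simp]: "ev [:1,1:] x = 1 + x" by (simp add: ev_def map_poly_pCons)
lemma ev_monom1 [simp]: "ev (monom 1 j) x = x ^ j"
  by (simp add: ev_def map_poly_monom poly_monom)

lemma ev_qint: "ev (qint k) x = (\<Sum>j<k. x ^ j)"
  by (simp add: qint_def ev_sum)

lemma qint_rev:
  assumes "q \<noteq> 0"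
  shows "ev (qint (Suc a)) (inverse q) = ev (qint (Suc a)) q / q ^ a"
proof -
  have "q ^ a * (\<Sum>j<Suc a. inverse q ^ j) = (\<Sum>j<Suc a. q ^ (a - j))"
    unfolding sum_distrib_left
    by (rule sum.cong) (auto simp: assms power_diff_conv_inverse)
  also have "\<dots> = (\<Sum>j<Suc a. q ^ j)"
    using sum.nat_diff_reindex[where g = "\<lambda>j. q ^ j" and n = "Suc a"] by simp
  finally have A: "(\<Sum>j<Suc a. inverse q ^ j) * q ^ a = (\<Sum>j<Suc a. q ^ j)"
    by (simp only: mult.commute)
  show ?thesis unfolding ev_qint using A assms by (simp add: eq_divide_eq del: sum.lessThan_Suc)
qed

lemma TT_ev: "(1 + x) * ev (TT k) x = ev (qint k) x * ev (qint (Suc k)) x"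
proof -
  have "ev ([:1,1:] * TT k) x = ev (qint k * qint (Suc k)) x" by (simp only: TT)
  then show ?thesis by (simp only: ev_mult ev_11)
qed

lemma TT_rev:
  assumes "q \<noteq> 0"
  shows "ev (TT (Suc a)) (inverse q) = ev (TT (Suc a)) q / q ^ (2 * a)"
proof (cases "q = -1")
  case True
  then show ?thesis by (simp add: power_mult)
next
  case False
  have "(1 + inverse q) * ev (TT (Suc a)) (inverse q)
     = (ev (qint (Suc a)) q / q ^ a) * (ev (qint (Suc (Suc a))) q / q ^ Suc a)"
    unfolding TT_ev qint_rev[OF assms] ..
  also have "\<dots> = (ev (qint (Suc a)) q * ev (qint (Suc (Suc a))) q) / (q ^ a * q ^ Suc a)"
    by simp
  also have "\<dots> = (1 + q) * ev (TT (Suc a)) q / q ^ (2 * a + 1)"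
    unfolding TT_ev[symmetric] by (simp add: power_add mult_2 mult.commute power_mult power2_eq_square)
  finally have F: "(1 + inverse q) * ev (TT (Suc a)) (inverse q) = (1 + q) * ev (TT (Suc a)) q / q ^ (2 * a + 1)" .
  have "(1 + q) * ev (TT (Suc a)) (inverse q) = q * ((1 + inverse q) * ev (TT (Suc a)) (inverse q))"
    using assms by (simp add: field_simps)
  also have "\<dots> = q * ((1 + q) * ev (TT (Suc a)) q / q ^ (2 * a + 1))" unfolding F ..
  also have "\<dots> = (1 + q) * (ev (TT (Suc a)) q / q ^ (2 * a))"
    using assms by (simp add: field_simps)
  finally have "(1 + q) * ev (TT (Suc a)) (inverse q) = (1 + q) * (ev (TT (Suc a)) q / q ^ (2 * a))" .
  moreover have "1 + q \<noteq> 0" using False by (simp add: add_eq_0_iff)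
  ultimately show ?thesis by (metis mult_left_cancel times_divide_eq_right)
qed

lemma qint_Suc_nz: "qint (Suc i) \<noteq> 0"
proof
  assume "qint (Suc i) = 0"
  then have "poly (qint (Suc i)) 0 = 0" by simp
  then show False by (simp add: qint_Suc)
qed

lemma qint_nz: "1 \<le> i \<Longrightarrow> qint i \<noteq> 0"
  using qint_Suc_nz[of "i - 1"] by simp

lemma qfact_nz: "qfact m \<noteq> 0"
  unfolding qfact_def using qint_nz by simp

lemma qint_2: "qint 2 = [:1,1:]"
  by (simp add: numeral_2_eq_2 qint_Suc' one_pCons)

lemma qbinom_gt: "m < k \<Longrightarrow> qbinom m k = 0" by (simp add: qbinom_def)
lemma qbinom_same: "qbinom m m = 1" by (simp add: qbinom_def qfact_nz)
lemma qbinom_Suc: "qbinom (Suc a) a = qint (Suc a)"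
  by (simp add: qbinom_def qfact_Suc qfact_nz)
lemma qbinom_Suc_Suc: "qbinom (Suc (Suc a)) a = TT (Suc a)"
proof -
  have d: "Suc (Suc a) - a = 2" by simp
  have f2: "qfact 2 = [:1,1:]" by (simp add: numeral_2_eq_2 qfact_Suc qint_2[unfolded numeral_2_eq_2])
  have "qfact (Suc (Suc a)) = qfact a * (qint (Suc a) * qint (Suc (Suc a)))"
    by (simp add: qfact_Suc mult.assoc)
  also have "\<dots> = qfact a * ([:1,1:] * TT (Suc a))" by (simp only: TT)
  also have "\<dots> = (qfact a * qfact 2) * TT (Suc a)" by (simp only: f2 mult.assoc)
  finally have e: "qfact (Suc (Suc a)) = (qfact a * qfact 2) * TT (Suc a)" .
  have nz: "qfact a * qfact 2 \<noteq> 0" using qfact_nz by simp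
  have "qbinom (Suc (Suc a)) a = qfact (Suc (Suc a)) div (qfact a * qfact 2)"
    unfolding qbinom_def d by simp
  also have "\<dots> = TT (Suc a)" unfolding e using nz by (rule nonzero_mult_div_cancel_left)
  finally show ?thesis .
qed

definition adj :: "nat \<Rightarrow> nat \<Rightarrow> bool" where "adj a b \<longleftrightarrow> b \<le> Suc a \<and> a \<le> Suc b"

definition sw :: "nat \<Rightarrow> nat \<Rightarrow> int poly" where
  "sw a b = qbinom (Suc a) b * qbinom (Suc b) a"

lemma sw_same: "sw a a = qint (Suc a) ^ 2"
  by (simp add: sw_def qbinom_Suc power2_eq_square)
lemma sw_up: "sw a (Suc a) = TT (Suc a)"
  by (simp add: sw_def qbinom_Suc_Suc qbinom_same)
lemma sw_down: "sw (Suc a) a = TT (Suc a)"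
  by (simp add: sw_def qbinom_Suc_Suc qbinom_same)
lemma sw_nadj: "\<not> adj a b \<Longrightarrow> sw a b = 0"
  by (auto simp: sw_def adj_def qbinom_gt)

lemma TT_nz: "TT (Suc a) \<noteq> 0"
  using TT[of "Suc a"] qint_Suc_nz[of a] qint_Suc_nz[of "Suc a"] by auto

lemma sw_nz_iff: "sw a b \<noteq> 0 \<longleftrightarrow> adj a b"
proof
  assume "sw a b \<noteq> 0" then show "adj a b" using sw_nadj by blast
next
  assume "adj a b"
  then have "b = a \<or> b = Suc a \<or> a = Suc b" unfolding adj_def by arith
  then show "sw a b \<noteq> 0"
  proof (elim disjE)
    assume "b = a" then show ?thesis using qint_Suc_nz by (simp add: sw_same)
  next
    assume "b = Suc a" then show ?thesis using TT_nz by (simp add: sw_up)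
  next
    assume "a = Suc b" then show ?thesis using TT_nz by (simp add: sw_down)
  qed
qed




definition PP :: "nat \<Rightarrow> nat \<Rightarrow> (nat \<Rightarrow> nat) set" where
  "PP m a = {f. (\<forall>k. k \<notin> {1..m} \<longrightarrow> f k = 0) \<and> f m = a \<and> (\<forall>k<m. adj (f k) (f (Suc k)))}"

definition Wt :: "nat \<Rightarrow> (nat \<Rightarrow> nat) \<Rightarrow> int poly" where
  "Wt m f = (\<Prod>k<m. sw (f k) (f (Suc k)))"

definition Ex :: "nat \<Rightarrow> (nat \<Rightarrow> nat) \<Rightarrow> int" where
  "Ex m f = (\<Sum>k<m. (int k - int (f k)) * (1 - int (f k) + int (f (Suc k))))"

definition G :: "real \<Rightarrow> nat \<Rightarrow> nat \<Rightarrow> real" where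
  "G q m a = (\<Sum>f\<in>PP m a. inverse q powi Ex m f * ev (Wt m f) (inverse q))"

lemma PP_bound: "f \<in> PP m a \<Longrightarrow> k \<le> m \<Longrightarrow> f k \<le> k"
proof (induction k)
  case 0 then show ?case by (simp add: PP_def)
next
  case (Suc k)
  then have "adj (f k) (f (Suc k))" by (simp add: PP_def)
  with Suc show ?case by (simp add: adj_def)
qed

lemma PP_finite: "finite (PP m a)"
proof (rule finite_subset)
  show "PP m a \<subseteq> {f. \<forall>x. (x \<in> {1..m} \<longrightarrow> f x \<in> {0..m}) \<and> (x \<notin> {1..m} \<longrightarrow> f x = 0)}"
  proof
    fix f assume f: "f \<in> PP m a"
    then show "f \<in> {f. \<forall>x. (x \<in> {1..m} \<longrightarrow> f x \<in> {0..m}) \<and> (x \<notin> {1..m} \<longrightarrow> f x = 0)}"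
      using PP_bound[OF f] by (auto simp: PP_def) (meson le_trans)
  qed
  show "finite {f. \<forall>x. (x \<in> {1..m} \<longrightarrow> f x \<in> {0..m}) \<and> (x \<notin> {1..m} \<longrightarrow> (f x :: nat) = 0)}"
    by (rule finite_set_of_finite_funs) auto
qed

lemma PP_0: "PP 0 a = (if a = 0 then {\<lambda>_. 0} else {})"
  by (auto simp: PP_def)

lemma adjset_finite: "finite {a. adj a b}"
  by (rule finite_subset[of _ "{..Suc b}"]) (auto simp: adj_def)

lemma PP_Suc: "PP (Suc m) b = (\<lambda>(a, f). f(Suc m := b)) ` (SIGMA a:{a. adj a b}. PP m a)"
proof
  show "PP (Suc m) b \<subseteq> (\<lambda>(a, f). f(Suc m := b)) ` (SIGMA a:{a. adj a b}. PP m a)"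
  proof
    fix g assume g: "g \<in> PP (Suc m) b"
    define f where "f = g(Suc m := 0)"
    have "f \<in> PP m (g m)" using g by (auto simp: PP_def f_def)
    moreover have "adj (g m) b" using g by (auto simp: PP_def)
    moreover have "g = f(Suc m := b)" using g by (auto simp: PP_def f_def)
    ultimately show "g \<in> (\<lambda>(a, f). f(Suc m := b)) ` (SIGMA a:{a. adj a b}. PP m a)"
      by (auto intro!: image_eqI[where x = "(g m, f)"])
  qed
next
  show "(\<lambda>(a, f). f(Suc m := b)) ` (SIGMA a:{a. adj a b}. PP m a) \<subseteq> PP (Suc m) b"
    by (auto simp: PP_def less_Suc_eq)
qed

lemma PP_inj: "inj_on (\<lambda>(a, f). f(Suc m := b)) (SIGMA a:{a. adj a b}. PP m a)"
proof (rule inj_onI, clarsimp)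
  fix a f a' f'
  assume f: "f \<in> PP m a" and f': "f' \<in> PP m a'" and e: "f(Suc m := b) = f'(Suc m := b)"
  have "f = f'"
  proof
    fix k show "f k = f' k"
    proof (cases "k = Suc m")
      case True then show ?thesis using f f' by (simp add: PP_def)
    next
      case False then show ?thesis using fun_cong[OF e, of k] by simp
    qed
  qed
  moreover have "a = f m" "a' = f' m" using f f' by (auto simp: PP_def)
  ultimately show "a = a' \<and> f = f'" by simp
qed

lemma Ex_upd: "f \<in> PP m a \<Longrightarrow> Ex (Suc m) (f(Suc m := b)) = Ex m f + (int m - int a) * (1 - int a + int b)"
  unfolding Ex_def by (simp add: PP_def)

lemma Wt_upd: "f \<in> PP m a \<Longrightarrow> Wt (Suc m) (f(Suc m := b)) = Wt m f * sw a b"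
  unfolding Wt_def by (simp add: PP_def)

definition step :: "real \<Rightarrow> nat \<Rightarrow> nat \<Rightarrow> nat \<Rightarrow> real" where
  "step q m a b = inverse q powi ((int m - int a) * (1 - int a + int b)) * ev (sw a b) (inverse q)"

lemma G_Suc:
  assumes "q \<noteq> 0"
  shows "G q (Suc m) b = (\<Sum>a\<in>{a. adj a b}. G q m a * step q m a b)"
proof -
  have "G q (Suc m) b = (\<Sum>(a, f)\<in>(SIGMA a:{a. adj a b}. PP m a).
      inverse q powi Ex (Suc m) (f(Suc m := b)) * ev (Wt (Suc m) (f(Suc m := b))) (inverse q))"
    unfolding G_def PP_Suc by (subst sum.reindex[OF PP_inj]) (simp add: case_prod_beta)
  also have "\<dots> = (\<Sum>a\<in>{a. adj a b}. \<Sum>f\<in>PP m a.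
      inverse q powi Ex (Suc m) (f(Suc m := b)) * ev (Wt (Suc m) (f(Suc m := b))) (inverse q))"
    by (rule sum.Sigma[symmetric]) (auto simp: adjset_finite PP_finite)
  also have "\<dots> = (\<Sum>a\<in>{a. adj a b}. \<Sum>f\<in>PP m a.
      (inverse q powi Ex m f * ev (Wt m f) (inverse q)) * step q m a b)"
    by (intro sum.cong refl) (simp add: Ex_upd Wt_upd step_def power_int_add assms)
  also have "\<dots> = (\<Sum>a\<in>{a. adj a b}. G q m a * step q m a b)"
    by (simp add: G_def sum_distrib_right)
  finally show ?thesis .
qed

definition tri :: "nat \<Rightarrow> nat" where "tri k = k * (k - 1) div 2"

lemma tri_Suc: "tri (Suc k) = tri k + k"
proof -
  have "Suc k * (Suc k - 1) = k * (k - 1) + 2 * k" by (cases k) (simp_all add: algebra_simps)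
  then show ?thesis unfolding tri_def by simp
qed

lemma tri_0 [simp]: "tri 0 = 0" by (simp add: tri_def)
lemma tri_1 [simp]: "tri (Suc 0) = 0" by (simp add: tri_def)

definition ee :: "nat \<Rightarrow> nat \<Rightarrow> int" where
  "ee m a = int (tri m) + int m * int a - int (tri (Suc a))"

lemma pw:
  assumes "(q::real) \<noteq> 0"
  shows "q powi x * (inverse q powi y * (c / q ^ k)) = q powi (x - y - int k) * c"
proof -
  have "q powi (x - y - int k) = q powi x / q powi y / q powi (int k)"
    using assms by (simp add: power_int_diff)
  then show ?thesis using assms by (simp add: power_int_inverse field_simps)
qed

lemma W_same:
  assumes "(q::real) \<noteq> 0"
  shows "q powi (ee (Suc m) a - ee m a) * step q m a a = ev (qint (Suc a) ^ 2) q"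
proof -
  have "step q m a a = inverse q powi (int m - int a) * (ev (qint (Suc a)) q ^ 2 / q ^ (2 * a))"
    by (simp add: step_def sw_same qint_rev[OF assms] power_divide power_mult mult.commute)
  moreover have "ee (Suc m) a - ee m a - (int m - int a) - int (2 * a) = 0"
    by (simp add: ee_def tri_Suc algebra_simps)
  ultimately show ?thesis using pw[OF assms] by simp
qed

lemma W_up:
  assumes "(q::real) \<noteq> 0"
  shows "q powi (ee (Suc m) (Suc a) - ee m a) * step q m a (Suc a) = ev (TT (Suc a)) q"
proof -
  have "step q m a (Suc a) = inverse q powi ((int m - int a) * 2) * (ev (TT (Suc a)) q / q ^ (2 * a))"
    by (simp add: step_def sw_up TT_rev[OF assms])
  moreover have "ee (Suc m) (Suc a) - ee m a - (int m - int a) * 2 - int (2 * a) = 0"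
    by (simp add: ee_def tri_Suc algebra_simps)
  ultimately show ?thesis using pw[OF assms] by simp
qed

lemma W_down:
  assumes "(q::real) \<noteq> 0"
  shows "q powi (ee (Suc m) a - ee m (Suc a)) * step q m (Suc a) a = q * ev (TT (Suc a)) q"
proof -
  have "step q m (Suc a) a = inverse q powi 0 * (ev (TT (Suc a)) q / q ^ (2 * a))"
    by (simp add: step_def sw_down TT_rev[OF assms])
  moreover have "ee (Suc m) a - ee m (Suc a) - 0 - int (2 * a) = 1"
    by (simp add: ee_def tri_Suc algebra_simps)
  ultimately show ?thesis using pw[OF assms, of "ee (Suc m) a - ee m (Suc a)" 0 "ev (TT (Suc a)) q" "2 * a"]
    by simp
qed

lemma ev_pCons0 [simp]: "ev (pCons 0 p) x = x * ev p x"
  by (simp add: ev_def map_poly_pCons)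

lemma split_term:
  assumes "(q::real) \<noteq> 0"
  shows "q powi ee (Suc m) b * (G q m a * step q m a b)
       = (q powi ee m a * G q m a) * (q powi (ee (Suc m) b - ee m a) * step q m a b)"
  using assms by (simp add: power_int_diff)

lemma adjset_0: "{a. adj a 0} = {0, 1}"
  by (auto simp: adj_def)
lemma adjset_Suc: "{a. adj a (Suc c)} = {c, Suc c, Suc (Suc c)}"
  by (auto simp: adj_def)

lemma H_main:
  assumes "(q::real) \<noteq> 0"
  shows "q powi ee m a * G q m a = ev (hu m a) q"
proof (induction m arbitrary: a)
  case 0
  show ?case by (simp add: G_def PP_0 ee_def Wt_def Ex_def)
next
  case (Suc m)
  have "q powi ee (Suc m) a * G q (Suc m) a = (\<Sum>b\<in>{b. adj b a}. q powi ee (Suc m) a * (G q m b * step q m b a))"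
    by (simp add: G_Suc[OF assms] sum_distrib_left)
  also have "\<dots> = (\<Sum>b\<in>{b. adj b a}. ev (hu m b) q * (q powi (ee (Suc m) a - ee m b) * step q m b a))"
    by (simp add: split_term[OF assms] Suc)
  also have "\<dots> = ev (hu (Suc m) a) q"
  proof (cases a)
    case 0
    show ?thesis unfolding 0 adjset_0
      using W_same[OF assms, of m 0] W_down[OF assms, of m 0] by (simp add: ac_simps)
  next
    case (Suc c)
    show ?thesis unfolding Suc adjset_Suc
      using W_same[OF assms, of m "Suc c"] W_down[OF assms, of m "Suc c"] W_up[OF assms, of m c]
      by (simp add: ac_simps)
  qed
  finally show ?case .
qed

lemma qbinom_0 [simp]: "qbinom m 0 = 1"
  by (simp add: qbinom_def qfact_nz)

lemma supp_iff: fixes n :: nat and f :: "nat \<Rightarrow> nat" shows "(\<forall>k. k \<notin> {1..n - 1} \<longrightarrow> f k = 0) \<longleftrightarrow>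
    ((\<forall>k. k \<notin> {1..n} \<longrightarrow> f k = 0) \<and> f n = 0)"
proof (cases n)
  case 0 then show ?thesis by auto
next
  case (Suc m)
  show ?thesis
  proof
    assume H: "\<forall>k. k \<notin> {1..n - 1} \<longrightarrow> f k = 0"
    show "(\<forall>k. k \<notin> {1..n} \<longrightarrow> f k = 0) \<and> f n = 0"
      using H Suc by auto
  next
    assume H: "(\<forall>k. k \<notin> {1..n} \<longrightarrow> f k = 0) \<and> f n = 0"
    show "\<forall>k. k \<notin> {1..n - 1} \<longrightarrow> f k = 0"
    proof (intro allI impI)
      fix k assume k: "k \<notin> {1..n - 1}"
      show "f k = 0"
      proof (cases "k = n")
        case True then show ?thesis using H by simp
      next
        case False then show ?thesis using H k Suc by auto
      qed
    qed
  qed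
qed

lemma binprod_Wt:
  assumes "\<forall>k. k \<notin> {1..n - 1} \<longrightarrow> f k = 0"
  shows "hz_binprod n f = Wt n f"
proof (cases n)
  case 0 then show ?thesis by (simp add: hz_binprod_def Wt_def)
next
  case (Suc m)
  have f0: "f 0 = 0" and fn: "f (Suc m) = 0" using assms Suc by auto
  have "hz_binprod n f = (\<Prod>k<m. qbinom (Suc (f k)) (f (Suc k))) * (\<Prod>k<m. qbinom (Suc (f (Suc (Suc k)))) (f (Suc k)))"
    unfolding hz_binprod_def Suc by (simp add: prod.atLeast1_atMost_eq prod.distrib)
  also have "\<dots> = (\<Prod>k<Suc m. qbinom (Suc (f k)) (f (Suc k))) * (\<Prod>k<Suc m. qbinom (Suc (f (Suc k))) (f k))"
  proof -
    have a: "(\<Prod>k<Suc m. qbinom (Suc (f k)) (f (Suc k))) = (\<Prod>k<m. qbinom (Suc (f k)) (f (Suc k)))"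
      by (simp add: fn)
    have b: "(\<Prod>k<Suc m. qbinom (Suc (f (Suc k))) (f k)) = (\<Prod>k<m. qbinom (Suc (f (Suc (Suc k)))) (f (Suc k)))"
      by (subst prod.lessThan_Suc_shift) (simp add: f0)
    show ?thesis unfolding a b ..
  qed
  also have "\<dots> = Wt n f" unfolding Wt_def sw_def Suc by (simp add: prod.distrib)
  finally show ?thesis .
qed

lemma exp_Ex:
  assumes "\<forall>k. k \<notin> {1..n - 1} \<longrightarrow> f k = 0"
  shows "hz_exp n f = Ex n f"
proof (cases n)
  case 0 then show ?thesis by (simp add: hz_exp_def Ex_def)
next
  case (Suc m)
  have f0: "f 0 = 0" using assms by auto
  show ?thesis unfolding hz_exp_def Ex_def Suc
    by (subst sum.lessThan_Suc_shift) (simp add: sum.atLeast1_atMost_eq f0)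
qed

lemma index_PP: "hz_index n = PP n 0"
proof -
  have "hz_binprod n f \<noteq> 0 \<longleftrightarrow> (\<forall>k<n. adj (f k) (f (Suc k)))"
    if "\<forall>k. k \<notin> {1..n - 1} \<longrightarrow> f k = 0" for f
    using binprod_Wt[OF that] by (auto simp: Wt_def sw_nz_iff)
  then show ?thesis unfolding hz_index_def PP_def using supp_iff by blast
qed

theorem corollary3p5:
  fixes n :: nat and q :: real
  assumes "q \<noteq> 0"
  shows "h_tilde n q = poly (map_poly of_int (HZ_cbar (Suc n))) q"
proof -
  have "h_poincare n (inverse q) = G q n 0"
    unfolding h_poincare_def G_def index_PP
  proof (intro sum.cong refl)
    fix f assume "f \<in> PP n 0"
    then have S: "\<forall>k. k \<notin> {1..n - 1} \<longrightarrow> f k = 0" unfolding PP_def supp_iff by blast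
    show "inverse q powi hz_exp n f * poly (map_poly of_int (hz_binprod n f)) (inverse q) =
          inverse q powi Ex n f * ev (Wt n f) (inverse q)"
      using binprod_Wt[OF S] exp_Ex[OF S] by (simp add: ev_def)
  qed
  moreover have "q ^ (n * (n - 1) div 2) = q powi ee n 0"
    by (simp add: ee_def tri_def)
  ultimately have "h_tilde n q = q powi ee n 0 * G q n 0" by (simp add: h_tilde_def)
  also have "\<dots> = ev (hu n 0) q" by (rule H_main[OF assms])
  finally show ?thesis by (simp add: cbar_hu ev_def)
qed


end
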